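(* Let $X$ and $\Theta$ be compact metric spaces and $\tau:\Theta\times X\to X$, $(\theta,x)\mapsto\tau_\theta(x)$, continuous. Let $\Omega=X\times\Theta$ and let $\hat\nu$ be a holonomic Borel probability measure on $\Omega$, i.e. $\int_\Omega [f(\tau_\theta(x))-f(x)]\,d\hat\nu(x,\theta)=0$ for all $f\in C(X,\mathbb{R})$. Let $d\hat\nu(x,\theta)=d\nu_x(\theta)\,d\nu(x)$ be its disintegration with respect to the projection $T:\Omega\to X$ onto the first coordinate ($\nu=T_*\hat\nu$, and $\nu_x$ probability measures on $\Theta$). Let $\mu$ be a Borel probability measure on $\Theta$ such that $\nu_x\ll\mu$ for $\nu$-a.e. $x$, and let $J_x=d\nu_x/d\mu$ when $\nu_x\ll\mu$ and $J_x\equiv 0$ otherwise. Define $B_\mu(g)(x)=\int_\Theta g(\tau_\theta(x))\,d\mu(\theta)$, \[ h_v(\hat\nu)=\inf_{g\in C(X,\mathbb{R}),\,g>0}\int_X\ln\frac{B_\mu(g)}{g}\,d\nu,\qquad h_a(\hat\nu)=-\int_\Omega \ln J_x(\theta)\,d\nu_x(\theta)\,d\nu(x). \] Then $h_a(\hat\nu)\le h_v(\hat\nu)\le 0$. Moreover, if there exists a positive function $\phi\in C(X,\mathbb{R})$ that is optimal, i.e. $J_x(\theta)=\phi(\tau_\theta(x))/B_\mu(\phi)(x)$, then \[ h_a(\hat\nu)=h_v(\hat\nu)=\int_X\ln\frac{B_\mu(\phi)}{\phi}\,d\nu. \]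
   Context: $h_v$ is called the variational entropy and $h_a$ the average entropy of $\hat\nu$ with a priori probability $\mu$. *)

theory Defs
  imports "HOL-Probability.Probability"
begin

text \<open>Extended-real integral: positive part minus negative part (convention of ereal
  subtraction when both are infinite). Used so that the average entropy may take the
  value minus infinity.\<close>
definition eint :: "'a measure \<Rightarrow> ('a \<Rightarrow> ereal) \<Rightarrow> ereal" where
  "eint M f = enn2ereal (\<integral>\<^sup>+ x. e2ennreal (f x) \<partial>M) - enn2ereal (\<integral>\<^sup>+ x. e2ennreal (- f x) \<partial>M)"

definition Bmu :: "'t measure \<Rightarrow> ('t \<Rightarrow> 'x \<Rightarrow> 'x) \<Rightarrow> ('x \<Rightarrow> real) \<Rightarrow> 'x \<Rightarrow> real" where
  "Bmu \<mu> \<tau> g x = (\<integral> \<theta>. g (\<tau> \<theta> x) \<partial>\<mu>)"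

definition Jac :: "'t measure \<Rightarrow> ('x \<Rightarrow> 't measure) \<Rightarrow> 'x \<Rightarrow> 't \<Rightarrow> real" where
  "Jac \<mu> K x \<theta> = (if absolutely_continuous \<mu> (K x) then enn2real (RN_deriv \<mu> (K x) \<theta>) else 0)"

definition h_v :: "'t measure \<Rightarrow> ('t \<Rightarrow> 'x::topological_space \<Rightarrow> 'x) \<Rightarrow> 'x measure \<Rightarrow> ereal" where
  "h_v \<mu> \<tau> \<nu> = (INF g \<in> {g. continuous_on UNIV g \<and> (\<forall>x. 0 < g x)}.
      ereal (\<integral> x. ln (Bmu \<mu> \<tau> g x / g x) \<partial>\<nu>))"

definition h_a :: "'t measure \<Rightarrow> ('x \<Rightarrow> 't measure) \<Rightarrow> 'x measure \<Rightarrow> ereal" where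
  "h_a \<mu> K \<nu> = - eint \<nu> (\<lambda>x. eint (K x) (\<lambda>\<theta>. ereal (ln (Jac \<mu> K x \<theta>))))"

end

theory Submission
  imports Defs
begin



lemma eint_mono_AE:
  assumes "AE x in M. f x \<le> g x"
  shows "eint M f \<le> eint M g"
proof -
  have 1: "(\<integral>\<^sup>+ x. e2ennreal (f x) \<partial>M) \<le> (\<integral>\<^sup>+ x. e2ennreal (g x) \<partial>M)"
    using assms by (intro nn_integral_mono_AE) (auto elim!: eventually_mono intro: e2ennreal_mono)
  have 2: "(\<integral>\<^sup>+ x. e2ennreal (- g x) \<partial>M) \<le> (\<integral>\<^sup>+ x. e2ennreal (- f x) \<partial>M)"
    using assms by (intro nn_integral_mono_AE) (auto elim!: eventually_mono intro: e2ennreal_mono)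
  show ?thesis unfolding eint_def
    by (intro ereal_minus_mono) (use 1 2 in \<open>auto simp: less_eq_ennreal.rep_eq\<close>)
qed

lemma enn2ereal_fin: "(a::ennreal) < top \<Longrightarrow> enn2ereal a = ereal (enn2real a)"
  by (cases a rule: ennreal_cases) auto

lemma eint_integrable:
  fixes f :: "'a \<Rightarrow> real"
  assumes "integrable M f"
  shows "eint M (\<lambda>x. ereal (f x)) = ereal (integral\<^sup>L M f)"
proof -
  have n: "(\<integral>\<^sup>+ x. ennreal (norm (f x)) \<partial>M) < \<infinity>"
    using assms by (simp add: integrable_iff_bounded)
  have a: "(\<integral>\<^sup>+ x. ennreal (f x) \<partial>M) < \<infinity>"
    by (rule le_less_trans[OF _ n], rule nn_integral_mono) auto
  have b: "(\<integral>\<^sup>+ x. ennreal (- f x) \<partial>M) < \<infinity>"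
    by (rule le_less_trans[OF _ n], rule nn_integral_mono) auto
  show ?thesis unfolding eint_def real_lebesgue_integral_def[OF assms]
    using a b by (simp add: enn2ereal_fin)
qed



lemma gibbs:
  fixes q :: "'t \<Rightarrow> real"
  assumes mu: "prob_space \<mu>" and Kp: "prob_space Kx" and sK: "sets Kx = sets \<mu>"
    and ac: "absolutely_continuous \<mu> Kx"
    and qm: "q \<in> borel_measurable \<mu>" and qa: "\<And>\<theta>. a \<le> q \<theta>" and a0: "0 < a"
    and qb: "\<And>\<theta>. q \<theta> \<le> b"
    and qint: "integral\<^sup>L \<mu> q = 1"
  shows "ereal (\<integral>\<theta>. ln (q \<theta>) \<partial>Kx) \<le> eint Kx (\<lambda>\<theta>. ereal (ln (enn2real (RN_deriv \<mu> Kx \<theta>))))"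
proof -
  interpret mu: prob_space \<mu> by fact
  interpret K: prob_space Kx by fact
  define J where "J \<theta> = enn2real (RN_deriv \<mu> Kx \<theta>)" for \<theta>
  have Jm[measurable]: "J \<in> borel_measurable \<mu>" unfolding J_def by measurable
  have Jnn: "0 \<le> J \<theta>" for \<theta> unfolding J_def by simp
  have fin: "AE \<theta> in \<mu>. RN_deriv \<mu> Kx \<theta> \<noteq> \<infinity>"
    by (rule mu.RN_deriv_finite[OF _ ac sK]) (simp add: K.sigma_finite_measure_axioms)
  have Kd: "Kx = density \<mu> (\<lambda>\<theta>. ennreal (J \<theta>))"
  proof -
    have "Kx = density \<mu> (RN_deriv \<mu> Kx)" using mu.density_RN_deriv[OF ac sK] by simp
    also have "\<dots> = density \<mu> (\<lambda>\<theta>. ennreal (J \<theta>))"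
      by (rule density_cong) (use fin in \<open>auto simp: J_def ennreal_enn2real_if elim!: eventually_mono\<close>)
    finally show ?thesis .
  qed
  have qmK[measurable]: "q \<in> borel_measurable Kx" using qm sK by (simp cong: measurable_cong_sets)
  have JmK[measurable]: "J \<in> borel_measurable Kx" using Jm sK by (simp cong: measurable_cong_sets)
  have qpos: "0 < q \<theta>" for \<theta> using qa[of \<theta>] a0 by linarith
  have lnq_int: "integrable Kx (\<lambda>\<theta>. ln (q \<theta>))"
  proof (rule K.integrable_const_bound[where B="max \<bar>ln a\<bar> \<bar>ln b\<bar>"])
    show "AE x in Kx. norm (ln (q x)) \<le> max \<bar>ln a\<bar> \<bar>ln b\<bar>"
    proof (intro AE_I2)
      fix x
      have "ln a \<le> ln (q x)" using qa[of x] a0 by simp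
      moreover have "ln (q x) \<le> ln b" using qb[of x] qpos[of x] by (meson ln_le_cancel_iff order.strict_trans2)
      ultimately show "norm (ln (q x)) \<le> max \<bar>ln a\<bar> \<bar>ln b\<bar>" by auto
    qed
  qed measurable
  show ?thesis
  proof (cases "(\<integral>\<^sup>+ \<theta>. e2ennreal (ereal (ln (J \<theta>))) \<partial>Kx) = \<infinity>")
    case True
    then show ?thesis unfolding eint_def J_def[symmetric] by simp
  next
    case False
    have pos: "(\<integral>\<^sup>+ \<theta>. ennreal (ln (J \<theta>)) \<partial>Kx) < \<infinity>"
      using False by (simp add: e2ennreal_ereal top.not_eq_extremum)
    have pw: "ennreal (J \<theta>) * ennreal (- ln (J \<theta>)) \<le> 1" for \<theta>
    proof (cases "J \<theta> < 1 \<and> 0 < J \<theta>")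
      case True
      have "- ln (J \<theta>) = ln (1 / J \<theta>)" using True by (simp add: ln_div)
      also have "\<dots> \<le> 1 / J \<theta> - 1" using True by (intro ln_le_minus_one) auto
      finally have "J \<theta> * (- ln (J \<theta>)) \<le> J \<theta> * (1 / J \<theta> - 1)"
        using True by (intro mult_left_mono) auto
      also have "\<dots> \<le> 1" using True by (simp add: field_simps)
      finally have "J \<theta> * (- ln (J \<theta>)) \<le> 1" .
      moreover have "0 \<le> - ln (J \<theta>)" using True by simp
      ultimately show ?thesis using Jnn[of \<theta>] by (simp add: ennreal_mult'' [symmetric] ennreal_le_1)
    next
      case False
      then have "J \<theta> = 0 \<or> 1 \<le> J \<theta>" using Jnn[of \<theta>] by auto
      then show ?thesis by (auto simp: ennreal_neg)
    qed
    have neg: "(\<integral>\<^sup>+ \<theta>. ennreal (- ln (J \<theta>)) \<partial>Kx) < \<infinity>"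
    proof -
      have "(\<integral>\<^sup>+ \<theta>. ennreal (- ln (J \<theta>)) \<partial>Kx) = (\<integral>\<^sup>+ \<theta>. ennreal (J \<theta>) * ennreal (- ln (J \<theta>)) \<partial>\<mu>)"
        by (subst Kd, subst nn_integral_density) auto
      also have "\<dots> \<le> (\<integral>\<^sup>+ \<theta>. 1 \<partial>\<mu>)" by (intro nn_integral_mono pw)
      also have "\<dots> < \<infinity>" by (simp add: mu.emeasure_space_1)
      finally show ?thesis .
    qed
    have lnJ_int: "integrable Kx (\<lambda>\<theta>. ln (J \<theta>))"
    proof -
      have "(\<integral>\<^sup>+ \<theta>. ennreal (norm (ln (J \<theta>))) \<partial>Kx) = (\<integral>\<^sup>+ \<theta>. ennreal (ln (J \<theta>)) + ennreal (- ln (J \<theta>)) \<partial>Kx)"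
        by (intro nn_integral_cong) (auto simp: ennreal_neg abs_if)
      also have "\<dots> = (\<integral>\<^sup>+ \<theta>. ennreal (ln (J \<theta>)) \<partial>Kx) + (\<integral>\<^sup>+ \<theta>. ennreal (- ln (J \<theta>)) \<partial>Kx)"
        by (intro nn_integral_add) auto
      also have "\<dots> < \<infinity>" using pos neg by simp
      finally show ?thesis by (simp add: integrable_iff_bounded)
    qed
    have r_int_mu: "integrable \<mu> (\<lambda>\<theta>. J \<theta> *\<^sub>R (q \<theta> / J \<theta>))"
    proof (rule mu.integrable_const_bound[where B=b])
      show "AE x in \<mu>. norm (J x *\<^sub>R (q x / J x)) \<le> b"
        using qb qpos Jnn by (intro AE_I2) (auto simp: less_imp_le intro: order.trans[OF less_imp_le[OF qpos] qb])
    qed (intro borel_measurable_scaleR borel_measurable_divide Jm qm)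
    have r_int: "integrable Kx (\<lambda>\<theta>. q \<theta> / J \<theta>)"
      using r_int_mu by (subst Kd, subst integrable_density) (auto intro!: borel_measurable_divide Jm qm Jnn)
    have r_le: "(\<integral>\<theta>. q \<theta> / J \<theta> \<partial>Kx) \<le> 1"
    proof -
      have "(\<integral>\<theta>. q \<theta> / J \<theta> \<partial>Kx) = (\<integral>\<theta>. J \<theta> *\<^sub>R (q \<theta> / J \<theta>) \<partial>\<mu>)"
        by (subst Kd, subst integral_density) (auto intro!: borel_measurable_divide Jm qm Jnn)
      also have "\<dots> \<le> (\<integral>\<theta>. q \<theta> \<partial>\<mu>)"
      proof (rule integral_mono[OF r_int_mu])
        show "integrable \<mu> q" using qa qb qpos
          by (intro mu.integrable_const_bound[where B=b]) (auto intro!: AE_I2 qm simp: less_imp_le)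
        show "J x *\<^sub>R (q x / J x) \<le> q x" for x using qpos[of x] by (cases "J x = 0") auto
      qed
      finally show ?thesis using qint by simp
    qed
    have AEpos: "AE \<theta> in Kx. 0 < J \<theta>"
      by (subst Kd, subst AE_density) (auto intro!: AE_I2)
    have "(\<integral>\<theta>. ln (q \<theta>) \<partial>Kx) \<le> (\<integral>\<theta>. ln (J \<theta>) + (q \<theta> / J \<theta> - 1) \<partial>Kx)"
    proof (rule integral_mono_AE[OF lnq_int])
      show "integrable Kx (\<lambda>\<theta>. ln (J \<theta>) + (q \<theta> / J \<theta> - 1))"
        using lnJ_int r_int by auto
      show "AE \<theta> in Kx. ln (q \<theta>) \<le> ln (J \<theta>) + (q \<theta> / J \<theta> - 1)"
        using AEpos
      proof (rule eventually_mono)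
        fix \<theta> assume J0: "0 < J \<theta>"
        have "ln (q \<theta>) - ln (J \<theta>) = ln (q \<theta> / J \<theta>)" using J0 qpos[of \<theta>] by (simp add: ln_div)
        also have "\<dots> \<le> q \<theta> / J \<theta> - 1" using J0 qpos[of \<theta>] by (intro ln_le_minus_one) auto
        finally show "ln (q \<theta>) \<le> ln (J \<theta>) + (q \<theta> / J \<theta> - 1)" by simp
      qed
    qed
    also have "\<dots> = (\<integral>\<theta>. ln (J \<theta>) \<partial>Kx) + ((\<integral>\<theta>. q \<theta> / J \<theta> \<partial>Kx) - 1)"
      using lnJ_int r_int by (simp add: K.prob_space)
    also have "\<dots> \<le> (\<integral>\<theta>. ln (J \<theta>) \<partial>Kx)" using r_le by simp
    finally have "(\<integral>\<theta>. ln (q \<theta>) \<partial>Kx) \<le> (\<integral>\<theta>. ln (J \<theta>) \<partial>Kx)" .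
    then show ?thesis unfolding J_def[symmetric] eint_integrable[OF lnJ_int] by simp
  qed
qed

lemma gibbs_eq:
  fixes q :: "'t \<Rightarrow> real"
  assumes Kp: "prob_space Kx" and sK: "sets Kx = sets \<mu>"
    and ac: "absolutely_continuous \<mu> Kx"
    and qm: "q \<in> borel_measurable \<mu>" and qa: "\<And>\<theta>. a \<le> q \<theta>" and a0: "0 < a"
    and qb: "\<And>\<theta>. q \<theta> \<le> b"
    and eq: "AE \<theta> in \<mu>. enn2real (RN_deriv \<mu> Kx \<theta>) = q \<theta>"
  shows "eint Kx (\<lambda>\<theta>. ereal (ln (enn2real (RN_deriv \<mu> Kx \<theta>)))) = ereal (\<integral>\<theta>. ln (q \<theta>) \<partial>Kx)"
proof -
  interpret K: prob_space Kx by fact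
  have qmK: "q \<in> borel_measurable Kx" using qm sK by (simp cong: measurable_cong_sets)
  have qpos: "0 < q \<theta>" for \<theta> using qa[of \<theta>] a0 by linarith
  have lnq_int: "integrable Kx (\<lambda>\<theta>. ln (q \<theta>))"
  proof (rule K.integrable_const_bound[where B="max \<bar>ln a\<bar> \<bar>ln b\<bar>"])
    show "AE x in Kx. norm (ln (q x)) \<le> max \<bar>ln a\<bar> \<bar>ln b\<bar>"
    proof (intro AE_I2)
      fix x
      have "ln a \<le> ln (q x)" using qa[of x] a0 by simp
      moreover have "ln (q x) \<le> ln b" using qb[of x] qpos[of x] by (meson ln_le_cancel_iff order.strict_trans2)
      ultimately show "norm (ln (q x)) \<le> max \<bar>ln a\<bar> \<bar>ln b\<bar>" by auto
    qed
  qed (use qmK in simp)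
  have eqK: "AE \<theta> in Kx. enn2real (RN_deriv \<mu> Kx \<theta>) = q \<theta>"
    by (rule absolutely_continuous_AE[OF sK ac eq])
  have "eint Kx (\<lambda>\<theta>. ereal (ln (enn2real (RN_deriv \<mu> Kx \<theta>)))) = eint Kx (\<lambda>\<theta>. ereal (ln (q \<theta>)))"
    by (intro antisym eint_mono_AE) (use eqK in \<open>auto elim!: eventually_mono\<close>)
  also have "\<dots> = ereal (\<integral>\<theta>. ln (q \<theta>) \<partial>Kx)" by (rule eint_integrable[OF lnq_int])
  finally show ?thesis .
qed



lemma finite_net:
  assumes "compact (UNIV :: 'a::metric_space set)" "0 < r"
  shows "\<exists>k::'a set. finite k \<and> (\<forall>x. \<exists>a\<in>k. dist a x < r)"
proof -
  have cov: "(UNIV::'a set) \<subseteq> (\<Union>c\<in>UNIV. ball c r)"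
  proof
    fix x :: 'a show "x \<in> (\<Union>c\<in>UNIV. ball c r)" using assms(2) centre_in_ball[of x r] by blast
  qed
  obtain C :: "'a set" where C: "finite C" "UNIV \<subseteq> (\<Union>c\<in>C. ball c r)"
    using compactE_image[OF assms(1), of UNIV "\<lambda>c. ball c r"] cov by auto
  show ?thesis
  proof (intro exI conjI allI)
    show "finite C" by fact
    fix x :: 'a
    from C(2) have "x \<in> (\<Union>c\<in>C. ball c r)" by blast
    then show "\<exists>a\<in>C. dist a x < r" by auto
  qed
qed

lemma sets_borel_prod_compact:
  assumes cA: "compact (UNIV :: 'a::metric_space set)" and cB: "compact (UNIV :: 'b::metric_space set)"
  shows "sets (borel \<Otimes>\<^sub>M borel :: ('a \<times> 'b) measure) = sets (borel :: ('a \<times> 'b) measure)"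
proof
  show "sets (borel \<Otimes>\<^sub>M borel :: ('a \<times> 'b) measure) \<subseteq> sets borel"
  proof (rule sets_pair_in_sets)
    fix a :: "'a set" and b :: "'b set" assume "a \<in> sets borel" "b \<in> sets borel"
    moreover have f: "fst \<in> borel_measurable (borel :: ('a \<times> 'b) measure)"
      by (intro borel_measurable_continuous_onI continuous_intros)
    moreover have s: "snd \<in> borel_measurable (borel :: ('a \<times> 'b) measure)"
      by (intro borel_measurable_continuous_onI continuous_intros)
    ultimately have "fst -` a \<inter> space borel \<in> sets (borel :: ('a \<times> 'b) measure)"
      "snd -` b \<inter> space borel \<in> sets (borel :: ('a \<times> 'b) measure)"
      using measurable_sets[OF f] measurable_sets[OF s] by auto
    then have "(fst -` a \<inter> space borel) \<inter> (snd -` b \<inter> space borel) \<in> sets (borel :: ('a \<times> 'b) measure)"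
      by auto
    moreover have "(fst -` a \<inter> space borel) \<inter> (snd -` b \<inter> space borel) = a \<times> b" by auto
    ultimately show "a \<times> b \<in> sets borel" by simp
  qed
next
  have "\<forall>n::nat. \<exists>k::'a set. finite k \<and> (\<forall>x. \<exists>a\<in>k. dist a x < 1 / Suc n)"
    using finite_net[OF cA] by simp
  then have "\<exists>SA::nat\<Rightarrow>'a set. \<forall>n. finite (SA n) \<and> (\<forall>x. \<exists>a\<in>SA n. dist a x < 1 / Suc n)" by (rule choice)
  then obtain SA :: "nat \<Rightarrow> 'a set" where SA0: "\<forall>n. finite (SA n) \<and> (\<forall>x. \<exists>a\<in>SA n. dist a x < 1 / Suc n)" by blast
  then have SA: "\<And>n. finite (SA n)" "\<And>n x. \<exists>a\<in>SA n. dist a x < 1 / Suc n" by blast+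
  have "\<forall>n::nat. \<exists>k::'b set. finite k \<and> (\<forall>x. \<exists>a\<in>k. dist a x < 1 / Suc n)"
    using finite_net[OF cB] by simp
  then have "\<exists>SB::nat\<Rightarrow>'b set. \<forall>n. finite (SB n) \<and> (\<forall>x. \<exists>a\<in>SB n. dist a x < 1 / Suc n)" by (rule choice)
  then obtain SB :: "nat \<Rightarrow> 'b set" where SB0: "\<forall>n. finite (SB n) \<and> (\<forall>x. \<exists>a\<in>SB n. dist a x < 1 / Suc n)" by blast
  then have SB: "\<And>n. finite (SB n)" "\<And>n x. \<exists>a\<in>SB n. dist a x < 1 / Suc n" by blast+
  let ?R = "\<lambda>(n::nat, a::'a, c::'b). ball a (1 / Suc n) \<times> ball c (1 / Suc n)"
  have op: "U \<in> sets (borel \<Otimes>\<^sub>M borel)" if U: "open U" for U :: "('a \<times> 'b) set"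
  proof -
    define I where "I = {(n, a, c). a \<in> SA n \<and> c \<in> SB n \<and> ?R (n, a, c) \<subseteq> U}"
    have cI: "countable I"
    proof (rule countable_subset)
      show "I \<subseteq> (SIGMA n:UNIV. SA n \<times> SB n)" unfolding I_def by auto
      show "countable (SIGMA n:UNIV. SA n \<times> SB n)"
        using SA(1) SB(1) by (intro countable_SIGMA) (auto intro: countable_finite)
    qed
    have eq: "U = \<Union> (?R ` I)"
    proof
      show "\<Union> (?R ` I) \<subseteq> U" unfolding I_def by auto
      show "U \<subseteq> \<Union> (?R ` I)"
      proof
        fix p assume "p \<in> U"
        obtain x y where p: "p = (x, y)" by (cases p)
        obtain e where e: "0 < e" "ball p e \<subseteq> U" using U \<open>p \<in> U\<close> open_contains_ball by blast
        obtain n :: nat where n: "1 / Suc n < e / 4"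
        proof -
          obtain n :: nat where "inverse (real (Suc n)) < e / 4" using reals_Archimedean e(1)
            by (metis divide_pos_pos zero_less_numeral)
          then show ?thesis using that by (simp add: inverse_eq_divide)
        qed
        obtain a where a: "a \<in> SA n" "dist a x < 1 / Suc n" using SA(2) by blast
        obtain c where c: "c \<in> SB n" "dist c y < 1 / Suc n" using SB(2) by blast
        have sub: "?R (n, a, c) \<subseteq> U"
        proof clarify
          fix x' y' assume x': "x' \<in> ball a (1 / Suc n)" and y': "y' \<in> ball c (1 / Suc n)"
          have dx: "dist x x' < e / 2" using x' a(2) dist_triangle[of x x' a] n
            by (simp add: dist_commute)
          have dy: "dist y y' < e / 2" using y' c(2) dist_triangle[of y y' c] n
            by (simp add: dist_commute)
          have "dist (x, y) (x', y') \<le> dist x x' + dist y y'"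
            unfolding dist_Pair_Pair by (rule sqrt_sum_squares_le_sum) auto
          then have "dist p (x', y') < e" using dx dy p by simp
          then show "(x', y') \<in> U" using e(2) by auto
        qed
        have "p \<in> ?R (n, a, c)" using a c p by (simp add: dist_commute)
        moreover have "(n, a, c) \<in> I" using a c sub unfolding I_def by auto
        ultimately show "p \<in> \<Union> (?R ` I)" by blast
      qed
    qed
    have "\<Union> (?R ` I) \<in> sets (borel \<Otimes>\<^sub>M borel)"
      by (rule sets.countable_UN''[OF cI]) (auto intro!: pair_measureI)
    then show ?thesis using eq by simp
  qed
  show "sets (borel :: ('a \<times> 'b) measure) \<subseteq> sets (borel \<Otimes>\<^sub>M borel)"
    unfolding sets_borel
  proof (rule sets.sigma_sets_subset')
    show "Collect open \<subseteq> sets (borel \<Otimes>\<^sub>M borel :: ('a \<times> 'b) measure)" using op by blast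
    show "UNIV \<in> sets (borel \<Otimes>\<^sub>M borel :: ('a \<times> 'b) measure)"
      using sets.top[of "borel \<Otimes>\<^sub>M borel :: ('a \<times> 'b) measure"] by (simp add: space_pair_measure)
  qed
qed



lemma integral_bind_nonneg:
  fixes h :: "'b \<Rightarrow> real"
  assumes N: "N \<in> M \<rightarrow>\<^sub>M subprob_algebra B" and sp: "space M \<noteq> {}"
    and hm: "h \<in> borel_measurable B" and h0: "\<And>y. 0 \<le> h y" and hC: "\<And>y. h y \<le> C"
  shows "integral\<^sup>L (M \<bind> N) h = (\<integral>x. integral\<^sup>L (N x) h \<partial>M)"
proof -
  have C0: "0 \<le> C" using h0[of undefined] hC[of undefined] by linarith
  have sN: "\<And>x. x \<in> space M \<Longrightarrow> sets (N x) = sets B" using N by (rule sets_kernel)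
  have hmb: "h \<in> borel_measurable (M \<bind> N)" using hm sets_bind[OF sN sp] by (simp cong: measurable_cong_sets)
  have intm: "(\<lambda>x. integral\<^sup>L (N x) h) \<in> borel_measurable M"
    by (rule measurable_compose[OF N integral_measurable_subprob_algebra[OF hm]])
  have "integral\<^sup>L (M \<bind> N) h = enn2real (\<integral>\<^sup>+ y. ennreal (h y) \<partial>(M \<bind> N))"
    using hmb h0 by (intro integral_eq_nn_integral) auto
  also have "\<dots> = enn2real (\<integral>\<^sup>+ x. \<integral>\<^sup>+ y. ennreal (h y) \<partial>N x \<partial>M)"
    by (subst nn_integral_bind[OF _ N]) (use hm in auto)
  also have "\<dots> = enn2real (\<integral>\<^sup>+ x. ennreal (integral\<^sup>L (N x) h) \<partial>M)"
  proof (intro arg_cong[where f=enn2real] nn_integral_cong)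
    fix x assume x: "x \<in> space M"
    interpret sub: subprob_space "N x" using N x by (rule subprob_space_kernel)
    have hmx: "h \<in> borel_measurable (N x)" using hm sN[OF x] by (simp cong: measurable_cong_sets)
    have fin: "(\<integral>\<^sup>+ y. ennreal (h y) \<partial>N x) \<le> ennreal C"
      by (intro sub.nn_integral_le_const) (use hC C0 in auto)
    have "integral\<^sup>L (N x) h = enn2real (\<integral>\<^sup>+ y. ennreal (h y) \<partial>N x)"
      using hmx h0 by (intro integral_eq_nn_integral) auto
    moreover have "(\<integral>\<^sup>+ y. ennreal (h y) \<partial>N x) \<noteq> top"
      using fin by (auto simp: top_unique)
    ultimately show "(\<integral>\<^sup>+ y. ennreal (h y) \<partial>N x) = ennreal (integral\<^sup>L (N x) h)"
      by (simp add: ennreal_enn2real_if)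
  qed
  also have "\<dots> = (\<integral>x. integral\<^sup>L (N x) h \<partial>M)"
    using intm h0 by (intro integral_eq_nn_integral[symmetric]) (auto intro!: integral_nonneg)
  finally show ?thesis .
qed

lemma integral_bind_bounded:
  fixes h :: "'b \<Rightarrow> real"
  assumes N: "N \<in> M \<rightarrow>\<^sub>M subprob_algebra B" and PM: "prob_space M"
    and PN: "\<And>x. x \<in> space M \<Longrightarrow> prob_space (N x)"
    and hm: "h \<in> borel_measurable B" and hC: "\<And>y. \<bar>h y\<bar> \<le> C"
  shows "integral\<^sup>L (M \<bind> N) h = (\<integral>x. integral\<^sup>L (N x) h \<partial>M)"
    and "(\<lambda>x. integral\<^sup>L (N x) h) \<in> borel_measurable M"
    and "integrable M (\<lambda>x. integral\<^sup>L (N x) h)"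
proof -
  interpret M: prob_space M by fact
  have sp: "space M \<noteq> {}" by (rule M.not_empty)
  have sN: "\<And>x. x \<in> space M \<Longrightarrow> sets (N x) = sets B" using N by (rule sets_kernel)
  have PB: "prob_space (M \<bind> N)" by (rule M.prob_space_bind[OF AE_I2[OF PN] N])
  have hmb: "h \<in> borel_measurable (M \<bind> N)" using hm sets_bind[OF sN sp] by (simp cong: measurable_cong_sets)
  show intm: "(\<lambda>x. integral\<^sup>L (N x) h) \<in> borel_measurable M"
    by (rule measurable_compose[OF N integral_measurable_subprob_algebra[OF hm]])
  have ib: "\<bar>integral\<^sup>L (N x) h\<bar> \<le> C" if x: "x \<in> space M" for x
  proof -
    interpret P: prob_space "N x" using PN[OF x] .
    have hmx: "h \<in> borel_measurable (N x)" using hm sN[OF x] by (simp cong: measurable_cong_sets)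
    have "\<bar>integral\<^sup>L (N x) h\<bar> \<le> (\<integral>y. \<bar>h y\<bar> \<partial>N x)" by (rule integral_abs_bound)
    also have "\<dots> \<le> C"
      by (intro P.integral_le_const AE_I2 hC P.integrable_const_bound[where B=C]) (use hmx hC in auto)
    finally show ?thesis .
  qed
  show intg: "integrable M (\<lambda>x. integral\<^sup>L (N x) h)"
    by (intro M.integrable_const_bound[where B=C] intm) (use ib in \<open>auto intro!: AE_I2\<close>)
  have h0: "0 \<le> h y + C" for y using hC[of y] by linarith
  have hC2: "h y + C \<le> 2 * C" for y using hC[of y] by linarith
  have "integral\<^sup>L (M \<bind> N) (\<lambda>y. h y + C) = (\<integral>x. integral\<^sup>L (N x) (\<lambda>y. h y + C) \<partial>M)"
    by (rule integral_bind_nonneg[OF N sp _ h0 hC2]) (use hm in simp)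
  moreover have "integral\<^sup>L (M \<bind> N) (\<lambda>y. h y + C) = integral\<^sup>L (M \<bind> N) h + C"
  proof -
    interpret P: prob_space "M \<bind> N" by fact
    have "integrable (M \<bind> N) h" by (intro P.integrable_const_bound[where B=C] hmb) (use hC in auto)
    then show ?thesis by (simp add: P.prob_space)
  qed
  moreover have "(\<integral>x. integral\<^sup>L (N x) (\<lambda>y. h y + C) \<partial>M) = (\<integral>x. integral\<^sup>L (N x) h + C \<partial>M)"
  proof (rule Bochner_Integration.integral_cong[OF refl])
    fix x assume x: "x \<in> space M"
    interpret P: prob_space "N x" using PN[OF x] .
    have hmx: "h \<in> borel_measurable (N x)" using hm sN[OF x] by (simp cong: measurable_cong_sets)
    have "integrable (N x) h" by (intro P.integrable_const_bound[where B=C] hmx) (use hC in auto)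
    then show "integral\<^sup>L (N x) (\<lambda>y. h y + C) = integral\<^sup>L (N x) h + C" by (simp add: P.prob_space)
  qed
  moreover have "(\<integral>x. integral\<^sup>L (N x) h + C \<partial>M) = (\<integral>x. integral\<^sup>L (N x) h \<partial>M) + C"
    using Bochner_Integration.integral_add[OF intg M.integrable_const[of C]] by (simp add: M.prob_space)
  ultimately show "integral\<^sup>L (M \<bind> N) h = (\<integral>x. integral\<^sup>L (N x) h \<partial>M)" by linarith
qed



locale setting =
  fixes \<tau> :: "'t::metric_space \<Rightarrow> 'x::metric_space \<Rightarrow> 'x"
    and \<nu>hat :: "('x \<times> 't) measure"
    and K :: "'x \<Rightarrow> 't measure"
    and \<mu> :: "'t measure"
  assumes X_compact: "compact (UNIV :: 'x set)"
    and Theta_compact: "compact (UNIV :: 't set)"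
    and tau_cont: "continuous_on UNIV (\<lambda>(\<theta>, x). \<tau> \<theta> x)"
    and nuhat_prob: "prob_space \<nu>hat" and nuhat_sets: "sets \<nu>hat = sets borel"
    and holonomic: "\<And>f :: 'x \<Rightarrow> real. continuous_on UNIV f \<Longrightarrow>
        (\<integral> (x, \<theta>). f (\<tau> \<theta> x) - f x \<partial>\<nu>hat) = 0"
    and K_prob: "\<And>x. prob_space (K x)" and K_sets: "\<And>x. sets (K x) = sets borel"
    and K_meas: "\<And>A. A \<in> sets borel \<Longrightarrow> (\<lambda>x. emeasure (K x) A) \<in> borel_measurable borel"
    and disint: "\<And>E. E \<in> sets borel \<Longrightarrow>
        emeasure \<nu>hat E = (\<integral>\<^sup>+ x. emeasure (K x) (Pair x -` E) \<partial>(distr \<nu>hat borel fst))"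
    and mu_prob: "prob_space \<mu>" and mu_sets: "sets \<mu> = sets borel"
    and ac: "AE x in distr \<nu>hat borel fst. absolutely_continuous \<mu> (K x)"
begin

abbreviation "nu \<equiv> distr \<nu>hat borel fst"

lemma SB: "sets (borel \<Otimes>\<^sub>M borel :: ('x \<times> 't) measure) = sets borel"
  by (rule sets_borel_prod_compact[OF X_compact Theta_compact])

lemma fst_m: "fst \<in> \<nu>hat \<rightarrow>\<^sub>M (borel :: 'x measure)"
proof -
  have "fst \<in> (borel :: ('x \<times> 't) measure) \<rightarrow>\<^sub>M (borel :: 'x measure)"
    by (intro borel_measurable_continuous_onI continuous_intros)
  then show ?thesis using nuhat_sets by (simp cong: measurable_cong_sets)
qed

lemma nu_prob: "prob_space nu"
  by (rule prob_space.prob_space_distr[OF nuhat_prob fst_m])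

lemma sets_nu: "sets nu = sets borel" by simp
lemma space_nu: "space nu = UNIV" by simp

lemma K_kernel: "K \<in> nu \<rightarrow>\<^sub>M subprob_algebra borel"
proof (rule measurable_subprob_algebra)
  show "subprob_space (K a)" for a using K_prob[of a] by (rule prob_space_imp_subprob_space)
  show "sets (K a) = sets borel" for a by (rule K_sets)
  show "(\<lambda>a. emeasure (K a) A) \<in> borel_measurable nu" if "A \<in> sets borel" for A
    using K_meas[OF that] by (simp cong: measurable_cong_sets)
qed

definition Mk :: "'x \<Rightarrow> ('x \<times> 't) measure" where
  "Mk x = distr (K x) (borel \<Otimes>\<^sub>M borel) (Pair x)"

lemma Pair_m: "Pair x \<in> K x \<rightarrow>\<^sub>M (borel \<Otimes>\<^sub>M borel)"
  by (rule measurable_Pair[OF measurable_const measurable_ident_sets[OF K_sets]]) simp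

lemma Mk_kernel: "Mk \<in> nu \<rightarrow>\<^sub>M subprob_algebra (borel \<Otimes>\<^sub>M borel)"
proof -
  have "(\<lambda>(x, y). (x, y)) \<in> (nu \<Otimes>\<^sub>M (borel :: 't measure)) \<rightarrow>\<^sub>M (borel \<Otimes>\<^sub>M borel)"
    by (simp add: measurable_ident_sets sets_pair_measure_cong)
  then have "(\<lambda>x. distr (K x) (borel \<Otimes>\<^sub>M borel) (Pair x)) \<in> nu \<rightarrow>\<^sub>M subprob_algebra (borel \<Otimes>\<^sub>M borel)"
    using measurable_distr2[where f=Pair and g=K and L=nu and M=borel, OF _ K_kernel] by simp
  then show ?thesis unfolding Mk_def[abs_def] .
qed

lemma Mk_prob: "prob_space (Mk x)"
  unfolding Mk_def by (rule prob_space.prob_space_distr[OF K_prob Pair_m])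

lemma nuhat_bind: "\<nu>hat = nu \<bind> Mk"
proof (rule measure_eqI)
  have sp: "space nu \<noteq> {}" by simp
  have sMk: "sets (Mk x) = sets (borel \<Otimes>\<^sub>M borel)" for x unfolding Mk_def by simp
  show "sets \<nu>hat = sets (nu \<bind> Mk)"
    using sets_bind[OF sMk sp] SB nuhat_sets by simp
  fix E assume "E \<in> sets \<nu>hat"
  then have E: "E \<in> sets borel" "E \<in> sets (borel \<Otimes>\<^sub>M borel)" using nuhat_sets SB by auto
  have "emeasure (nu \<bind> Mk) E = (\<integral>\<^sup>+ x. emeasure (Mk x) E \<partial>nu)"
    by (rule emeasure_bind[OF sp Mk_kernel E(2)])
  also have "\<dots> = (\<integral>\<^sup>+ x. emeasure (K x) (Pair x -` E) \<partial>nu)"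
  proof (rule nn_integral_cong)
    fix x
    have "emeasure (Mk x) E = emeasure (K x) (Pair x -` E \<inter> space (K x))"
      unfolding Mk_def by (rule emeasure_distr[OF Pair_m E(2)])
    also have "space (K x) = UNIV" using sets_eq_imp_space_eq[OF K_sets[of x]] by simp
    finally show "emeasure (Mk x) E = emeasure (K x) (Pair x -` E)" by simp
  qed
  also have "\<dots> = emeasure \<nu>hat E" using disint[OF E(1)] by simp
  finally show "emeasure \<nu>hat E = emeasure (nu \<bind> Mk) E" by simp
qed

lemma disint_int:
  fixes h :: "'x \<times> 't \<Rightarrow> real"
  assumes hm: "h \<in> borel_measurable borel" and hC: "\<And>y. \<bar>h y\<bar> \<le> C"
  shows "integral\<^sup>L \<nu>hat h = (\<integral>x. (\<integral>\<theta>. h (x, \<theta>) \<partial>K x) \<partial>nu)"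
    and "(\<lambda>x. \<integral>\<theta>. h (x, \<theta>) \<partial>K x) \<in> borel_measurable nu"
    and "integrable nu (\<lambda>x. \<integral>\<theta>. h (x, \<theta>) \<partial>K x)"
proof -
  have hm': "h \<in> borel_measurable (borel \<Otimes>\<^sub>M borel)" using hm SB by (simp cong: measurable_cong_sets)
  have eq: "integral\<^sup>L (Mk x) h = (\<integral>\<theta>. h (x, \<theta>) \<partial>K x)" for x
    unfolding Mk_def by (rule integral_distr[OF Pair_m hm'])
  note R = integral_bind_bounded[OF Mk_kernel nu_prob Mk_prob hm' hC]
  show "integral\<^sup>L \<nu>hat h = (\<integral>x. (\<integral>\<theta>. h (x, \<theta>) \<partial>K x) \<partial>nu)"
    using R(1) eq by (simp add: nuhat_bind[symmetric])
  show "(\<lambda>x. \<integral>\<theta>. h (x, \<theta>) \<partial>K x) \<in> borel_measurable nu" using R(2) eq by simp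
  show "integrable nu (\<lambda>x. \<integral>\<theta>. h (x, \<theta>) \<partial>K x)" using R(3) eq by simp
qed


lemma key:
  fixes g :: "'x \<Rightarrow> real"
  assumes gc: "continuous_on UNIV g" and gp: "\<forall>x. 0 < g x"
  shows "h_a \<mu> K nu \<le> ereal (\<integral>x. ln (Bmu \<mu> \<tau> g x / g x) \<partial>nu)"
    and "(AE x in nu. AE \<theta> in \<mu>. Jac \<mu> K x \<theta> = g (\<tau> \<theta> x) / Bmu \<mu> \<tau> g x) \<Longrightarrow>
         h_a \<mu> K nu = ereal (\<integral>x. ln (Bmu \<mu> \<tau> g x / g x) \<partial>nu)"
proof -
  interpret mu: prob_space \<mu> by (rule mu_prob)
  interpret nu: prob_space nu by (rule nu_prob)
  interpret nh: prob_space \<nu>hat by (rule nuhat_prob)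
  obtain xm where xm: "\<forall>y. g xm \<le> g y"
    using continuous_attains_inf[OF X_compact _ gc] by auto
  obtain xM where xM: "\<forall>y. g y \<le> g xM"
    using continuous_attains_sup[OF X_compact _ gc] by auto
  define m where "m = g xm"
  define Mx where "Mx = g xM"
  have m0: "0 < m" unfolding m_def using gp by simp
  have gm: "m \<le> g y" "g y \<le> Mx" for y unfolding m_def Mx_def using xm xM by auto
  have Mx0: "0 < Mx" using gm(2)[of xm] m0 gm(1)[of xm] by linarith
  have lng: "\<bar>ln (g y)\<bar> \<le> \<bar>ln m\<bar> + \<bar>ln Mx\<bar>" for y
  proof -
    have "ln m \<le> ln (g y)" using gm(1)[of y] m0 by simp
    moreover have "ln (g y) \<le> ln Mx" using gm(2)[of y] gp[rule_format, of y] by simp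
    ultimately show ?thesis by linarith
  qed
  have tc: "continuous_on UNIV (\<lambda>p::'x \<times> 't. \<tau> (snd p) (fst p))"
  proof -
    have "continuous_on UNIV ((\<lambda>(\<theta>, x). \<tau> \<theta> x) \<circ> (\<lambda>p::'x \<times> 't. (snd p, fst p)))"
      by (intro continuous_on_compose continuous_intros) (use tau_cont continuous_on_subset[OF _ subset_UNIV] in blast)
    then show ?thesis by (simp add: o_def)
  qed
  have tcx: "continuous_on UNIV (\<lambda>\<theta>. \<tau> \<theta> x)" for x
  proof -
    have "continuous_on UNIV ((\<lambda>p::'x \<times> 't. \<tau> (snd p) (fst p)) \<circ> (\<lambda>\<theta>. (x, \<theta>)))"
      by (intro continuous_on_compose continuous_intros) (use tc continuous_on_subset[OF _ subset_UNIV] in blast)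
    then show ?thesis by (simp add: o_def)
  qed
  have gtc: "continuous_on UNIV (\<lambda>p::'x \<times> 't. g (\<tau> (snd p) (fst p)))"
    by (rule continuous_on_compose2[OF gc tc]) auto
  define G where "G p = ln (g (\<tau> (snd p) (fst p)))" for p :: "'x \<times> 't"
  have Gc: "continuous_on UNIV G" unfolding G_def
    by (intro continuous_on_ln gtc) (use gp in \<open>auto simp: less_imp_neq[symmetric]\<close>)
  have Gm: "G \<in> borel_measurable borel" by (rule borel_measurable_continuous_onI[OF Gc])
  have GC: "\<bar>G p\<bar> \<le> \<bar>ln m\<bar> + \<bar>ln Mx\<bar>" for p unfolding G_def by (rule lng)
  have lngc: "continuous_on UNIV (\<lambda>x. ln (g x))"
    by (intro continuous_on_ln gc) (use gp in \<open>auto simp: less_imp_neq[symmetric]\<close>)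
  have lngm: "(\<lambda>x. ln (g x)) \<in> borel_measurable borel" by (rule borel_measurable_continuous_onI[OF lngc])
  define Bg where "Bg x = Bmu \<mu> \<tau> g x" for x
  have gxm: "(\<lambda>\<theta>. g (\<tau> \<theta> x)) \<in> borel_measurable \<mu>" for x
  proof -
    have "(\<lambda>\<theta>. g (\<tau> \<theta> x)) \<in> borel_measurable borel"
      by (intro borel_measurable_continuous_onI continuous_on_compose2[OF gc tcx]) auto
    then show ?thesis using mu_sets by (simp cong: measurable_cong_sets)
  qed
  have gxi: "integrable \<mu> (\<lambda>\<theta>. g (\<tau> \<theta> x))" for x
    by (intro mu.integrable_const_bound[where B=Mx] gxm AE_I2) (use gm gp in \<open>auto simp: less_imp_le\<close>)
  have Bgb: "m \<le> Bg x" "Bg x \<le> Mx" for x unfolding Bg_def Bmu_def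
    by (intro mu.integral_ge_const mu.integral_le_const gxi AE_I2 gm)+
  have Bg0: "0 < Bg x" for x using Bgb(1)[of x] m0 by linarith
  have Bgm: "Bg \<in> borel_measurable nu"
  proof -
    have "(\<lambda>p::'x \<times> 't. g (\<tau> (snd p) (fst p))) \<in> borel_measurable borel"
      by (rule borel_measurable_continuous_onI[OF gtc])
    moreover have "sets (nu \<Otimes>\<^sub>M \<mu>) = sets (borel :: ('x \<times> 't) measure)"
      using SB sets_pair_measure_cong[OF sets_nu mu_sets] by simp
    ultimately have "(\<lambda>p::'x \<times> 't. g (\<tau> (snd p) (fst p))) \<in> borel_measurable (nu \<Otimes>\<^sub>M \<mu>)"
      by (simp cong: measurable_cong_sets)
    then have "case_prod (\<lambda>x \<theta>. g (\<tau> \<theta> x)) \<in> borel_measurable (nu \<Otimes>\<^sub>M \<mu>)"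
      by (simp add: case_prod_beta')
    then have "(\<lambda>x. \<integral>\<theta>. g (\<tau> \<theta> x) \<partial>\<mu>) \<in> borel_measurable nu"
      by (rule mu.borel_measurable_lebesgue_integral)
    then show ?thesis unfolding Bg_def Bmu_def .
  qed
  have lnBg: "\<bar>ln (Bg x)\<bar> \<le> \<bar>ln m\<bar> + \<bar>ln Mx\<bar>" for x
  proof -
    have "ln m \<le> ln (Bg x)" using Bgb(1)[of x] m0 by simp
    moreover have "ln (Bg x) \<le> ln Mx" using Bgb(2)[of x] Bg0[of x] by simp
    ultimately show ?thesis by linarith
  qed
  have lnBgi: "integrable nu (\<lambda>x. ln (Bg x))"
    by (intro nu.integrable_const_bound[where B="\<bar>ln m\<bar> + \<bar>ln Mx\<bar>"] AE_I2)
       (use lnBg Bgm in auto)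
  have lngi: "integrable nu (\<lambda>x. ln (g x))"
    by (intro nu.integrable_const_bound[where B="\<bar>ln m\<bar> + \<bar>ln Mx\<bar>"] AE_I2)
       (use lng lngm in auto)
  define q where "q x \<theta> = g (\<tau> \<theta> x) / Bg x" for x \<theta>
  have qm: "q x \<in> borel_measurable \<mu>" for x unfolding q_def using gxm by simp
  have qa: "m / Mx \<le> q x \<theta>" for x \<theta> unfolding q_def
    using gm[of "\<tau> \<theta> x"] Bgb[of x] m0 Bg0[of x] by (simp add: frac_le)
  have qb: "q x \<theta> \<le> Mx / m" for x \<theta> unfolding q_def
    using gm[of "\<tau> \<theta> x"] Bgb[of x] m0 Bg0[of x] gp by (simp add: frac_le less_imp_le)
  have qint: "integral\<^sup>L \<mu> (q x) = 1" for x
    unfolding q_def using Bg0[of x] by (simp add: Bg_def Bmu_def)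
  have sKm: "sets (K x) = sets \<mu>" for x using K_sets mu_sets by simp
  define F where "F x = (\<integral>\<theta>. G (x, \<theta>) \<partial>K x) - ln (Bg x)" for x
  have lnq: "(\<integral>\<theta>. ln (q x \<theta>) \<partial>K x) = F x" for x
  proof -
    interpret Kx: prob_space "K x" by (rule K_prob)
    have Gxm: "(\<lambda>\<theta>. G (x, \<theta>)) \<in> borel_measurable (K x)"
    proof -
      have "(\<lambda>\<theta>. G (x, \<theta>)) \<in> borel_measurable borel"
        by (intro borel_measurable_continuous_onI continuous_on_compose2[OF Gc]) (auto intro!: continuous_intros)
      then show ?thesis using K_sets by (simp cong: measurable_cong_sets)
    qed
    have Gxi: "integrable (K x) (\<lambda>\<theta>. G (x, \<theta>))"
      by (intro Kx.integrable_const_bound[where B="\<bar>ln m\<bar> + \<bar>ln Mx\<bar>"] AE_I2 Gxm) (use GC in auto)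
    have "(\<integral>\<theta>. ln (q x \<theta>) \<partial>K x) = (\<integral>\<theta>. G (x, \<theta>) - ln (Bg x) \<partial>K x)"
      unfolding q_def G_def using gp Bg0 by (intro Bochner_Integration.integral_cong refl) (simp add: ln_div less_imp_neq[symmetric])
    also have "\<dots> = F x" unfolding F_def
      using Bochner_Integration.integral_diff[OF Gxi Kx.integrable_const[of "ln (Bg x)"]] by (simp add: Kx.prob_space)
    finally show ?thesis .
  qed
  note DI = disint_int[OF Gm GC]
  have Fi: "integrable nu F" unfolding F_def[abs_def] using DI(3) lnBgi by simp
  have intF: "integral\<^sup>L nu F = - (\<integral>x. ln (Bg x / g x) \<partial>nu)"
  proof -
    have "integral\<^sup>L nu F = (\<integral>x. (\<integral>\<theta>. G (x, \<theta>) \<partial>K x) \<partial>nu) - (\<integral>x. ln (Bg x) \<partial>nu)"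
      unfolding F_def[abs_def] by (rule Bochner_Integration.integral_diff[OF DI(3) lnBgi])
    also have "(\<integral>x. (\<integral>\<theta>. G (x, \<theta>) \<partial>K x) \<partial>nu) = integral\<^sup>L \<nu>hat G" using DI(1) by simp
    also have "integral\<^sup>L \<nu>hat G = (\<integral>p. ln (g (fst p)) \<partial>\<nu>hat)"
    proof -
      have Gmh: "G \<in> borel_measurable \<nu>hat" using Gm nuhat_sets by (simp cong: measurable_cong_sets)
      have Gi: "integrable \<nu>hat G"
        by (intro nh.integrable_const_bound[where B="\<bar>ln m\<bar> + \<bar>ln Mx\<bar>"] AE_I2 Gmh) (use GC in auto)
      have lgm: "(\<lambda>p. ln (g (fst p))) \<in> borel_measurable \<nu>hat"
        by (rule measurable_compose[OF fst_m lngm])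
      have lgi: "integrable \<nu>hat (\<lambda>p. ln (g (fst p)))"
        by (intro nh.integrable_const_bound[where B="\<bar>ln m\<bar> + \<bar>ln Mx\<bar>"] AE_I2 lgm) (use lng in auto)
      have "0 = (\<integral>(x, \<theta>). ln (g (\<tau> \<theta> x)) - ln (g x) \<partial>\<nu>hat)"
        using holonomic[OF lngc] by simp
      also have "\<dots> = (\<integral>p. G p - ln (g (fst p)) \<partial>\<nu>hat)"
        unfolding G_def by (simp add: case_prod_beta')
      also have "\<dots> = integral\<^sup>L \<nu>hat G - (\<integral>p. ln (g (fst p)) \<partial>\<nu>hat)"
        by (rule Bochner_Integration.integral_diff[OF Gi lgi])
      finally show ?thesis by simp
    qed
    also have "(\<integral>p. ln (g (fst p)) \<partial>\<nu>hat) = (\<integral>x. ln (g x) \<partial>nu)"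
      by (rule integral_distr[OF fst_m lngm, symmetric])
    also have "(\<integral>x. ln (g x) \<partial>nu) - (\<integral>x. ln (Bg x) \<partial>nu) = - (\<integral>x. ln (Bg x) - ln (g x) \<partial>nu)"
      using Bochner_Integration.integral_diff[OF lnBgi lngi] by simp
    also have "(\<integral>x. ln (Bg x) - ln (g x) \<partial>nu) = (\<integral>x. ln (Bg x / g x) \<partial>nu)"
      using gp Bg0 by (intro Bochner_Integration.integral_cong refl) (simp add: ln_div less_imp_neq[symmetric])
    finally show ?thesis .
  qed
  have eF: "eint nu (\<lambda>x. ereal (F x)) = ereal (- (\<integral>x. ln (Bg x / g x) \<partial>nu))"
    using eint_integrable[OF Fi] intF by simp
  define I where "I x = eint (K x) (\<lambda>\<theta>. ereal (ln (Jac \<mu> K x \<theta>)))" for x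
  have haI: "h_a \<mu> K nu = - eint nu I" unfolding h_a_def I_def[abs_def] by simp
  have Jac_ac: "Jac \<mu> K x \<theta> = enn2real (RN_deriv \<mu> (K x) \<theta>)" if "absolutely_continuous \<mu> (K x)" for x \<theta>
    using that by (simp add: Jac_def)
  have FI: "AE x in nu. ereal (F x) \<le> I x"
    using ac
  proof (rule eventually_mono)
    fix x assume acx: "absolutely_continuous \<mu> (K x)"
    have "ereal (\<integral>\<theta>. ln (q x \<theta>) \<partial>K x) \<le> eint (K x) (\<lambda>\<theta>. ereal (ln (enn2real (RN_deriv \<mu> (K x) \<theta>))))"
      by (rule gibbs[OF mu_prob K_prob sKm acx qm qa _ qb qint]) (use m0 Mx0 in simp)
    then show "ereal (F x) \<le> I x" unfolding I_def lnq using Jac_ac[OF acx] by simp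
  qed
  show "h_a \<mu> K nu \<le> ereal (\<integral>x. ln (Bmu \<mu> \<tau> g x / g x) \<partial>nu)"
  proof -
    have "eint nu (\<lambda>x. ereal (F x)) \<le> eint nu I" by (rule eint_mono_AE[OF FI])
    then have "- eint nu I \<le> - eint nu (\<lambda>x. ereal (F x))" by simp
    then show ?thesis unfolding haI eF Bg_def by simp
  qed
  assume EQ: "AE x in nu. AE \<theta> in \<mu>. Jac \<mu> K x \<theta> = g (\<tau> \<theta> x) / Bmu \<mu> \<tau> g x"
  have IF: "AE x in nu. I x \<le> ereal (F x)"
    using EQ ac
  proof (eventually_elim)
    case (elim x)
    then have acx: "absolutely_continuous \<mu> (K x)" by simp
    have eqx: "AE \<theta> in \<mu>. enn2real (RN_deriv \<mu> (K x) \<theta>) = q x \<theta>"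
      using elim(1) unfolding q_def Bg_def using Jac_ac[OF acx] by simp
    have "eint (K x) (\<lambda>\<theta>. ereal (ln (enn2real (RN_deriv \<mu> (K x) \<theta>)))) = ereal (\<integral>\<theta>. ln (q x \<theta>) \<partial>K x)"
      by (rule gibbs_eq[OF K_prob sKm acx qm qa _ qb eqx]) (use m0 Mx0 in simp)
    then show "I x \<le> ereal (F x)" unfolding I_def lnq using Jac_ac[OF acx] by simp
  qed
  have "eint nu I = eint nu (\<lambda>x. ereal (F x))"
    by (intro antisym eint_mono_AE IF FI)
  then show "h_a \<mu> K nu = ereal (\<integral>x. ln (Bmu \<mu> \<tau> g x / g x) \<partial>nu)"
    unfolding haI eF Bg_def by simp
qed

end
theorem mainTheorem5:
  fixes \<tau> :: "'t::metric_space \<Rightarrow> 'x::metric_space \<Rightarrow> 'x"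
    and \<nu>hat :: "('x \<times> 't) measure"
    and K :: "'x \<Rightarrow> 't measure"
    and \<mu> :: "'t measure"
  assumes X_compact: "compact (UNIV :: 'x set)"
    and Theta_compact: "compact (UNIV :: 't set)"
    and tau_cont: "continuous_on UNIV (\<lambda>(\<theta>, x). \<tau> \<theta> x)"
    and nuhat_prob: "prob_space \<nu>hat" and nuhat_sets: "sets \<nu>hat = sets borel"
    and holonomic: "\<And>f :: 'x \<Rightarrow> real. continuous_on UNIV f \<Longrightarrow>
        (\<integral> (x, \<theta>). f (\<tau> \<theta> x) - f x \<partial>\<nu>hat) = 0"
    and K_prob: "\<And>x. prob_space (K x)" and K_sets: "\<And>x. sets (K x) = sets borel"
    and K_meas: "\<And>A. A \<in> sets borel \<Longrightarrow> (\<lambda>x. emeasure (K x) A) \<in> borel_measurable borel"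
    and disint: "\<And>E. E \<in> sets borel \<Longrightarrow>
        emeasure \<nu>hat E = (\<integral>\<^sup>+ x. emeasure (K x) (Pair x -` E) \<partial>(distr \<nu>hat borel fst))"
    and mu_prob: "prob_space \<mu>" and mu_sets: "sets \<mu> = sets borel"
    and ac: "AE x in distr \<nu>hat borel fst. absolutely_continuous \<mu> (K x)"
  shows "h_a \<mu> K (distr \<nu>hat borel fst) \<le> h_v \<mu> \<tau> (distr \<nu>hat borel fst)
       \<and> h_v \<mu> \<tau> (distr \<nu>hat borel fst) \<le> 0
       \<and> (\<forall>\<phi> :: 'x \<Rightarrow> real. continuous_on UNIV \<phi> \<and> (\<forall>x. 0 < \<phi> x)
            \<and> (AE x in distr \<nu>hat borel fst. AE \<theta> in \<mu>.
                  Jac \<mu> K x \<theta> = \<phi> (\<tau> \<theta> x) / Bmu \<mu> \<tau> \<phi> x)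
          \<longrightarrow> h_a \<mu> K (distr \<nu>hat borel fst) = h_v \<mu> \<tau> (distr \<nu>hat borel fst)
            \<and> h_v \<mu> \<tau> (distr \<nu>hat borel fst)
                = ereal (\<integral> x. ln (Bmu \<mu> \<tau> \<phi> x / \<phi> x) \<partial>(distr \<nu>hat borel fst)))"
proof -
  interpret S: setting \<tau> \<nu>hat K \<mu>
    by (rule setting.intro; fact)
  interpret nu: prob_space "distr \<nu>hat borel fst" by (rule S.nu_prob)
  interpret mu: prob_space \<mu> by (rule mu_prob)
  let ?nu = "distr \<nu>hat borel fst"
  have one: "(\<lambda>_::'x. 1::real) \<in> {g. continuous_on UNIV g \<and> (\<forall>x. 0 < g x)}" by simp
  have "h_v \<mu> \<tau> ?nu \<le> ereal (\<integral> x. ln (Bmu \<mu> \<tau> (\<lambda>_. 1) x / 1) \<partial>?nu)"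
    unfolding h_v_def by (rule INF_lower[OF one])
  also have "\<dots> = 0" by (simp add: Bmu_def mu.prob_space)
  finally have hv0: "h_v \<mu> \<tau> ?nu \<le> 0" .
  have hav: "h_a \<mu> K ?nu \<le> h_v \<mu> \<tau> ?nu"
    unfolding h_v_def by (rule INF_greatest) (use S.key(1) in auto)
  show ?thesis
  proof (intro conjI hav hv0 allI impI)
    fix \<phi> :: "'x \<Rightarrow> real"
    assume A: "continuous_on UNIV \<phi> \<and> (\<forall>x. 0 < \<phi> x) \<and>
      (AE x in ?nu. AE \<theta> in \<mu>. Jac \<mu> K x \<theta> = \<phi> (\<tau> \<theta> x) / Bmu \<mu> \<tau> \<phi> x)"
    have E: "h_a \<mu> K ?nu = ereal (\<integral>x. ln (Bmu \<mu> \<tau> \<phi> x / \<phi> x) \<partial>?nu)"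
      using S.key(2)[of \<phi>] A by blast
    have "h_v \<mu> \<tau> ?nu \<le> ereal (\<integral>x. ln (Bmu \<mu> \<tau> \<phi> x / \<phi> x) \<partial>?nu)"
      unfolding h_v_def by (rule INF_lower) (use A in simp)
    then show "h_a \<mu> K ?nu = h_v \<mu> \<tau> ?nu" "h_v \<mu> \<tau> ?nu = ereal (\<integral>x. ln (Bmu \<mu> \<tau> \<phi> x / \<phi> x) \<partial>?nu)"
      using hav E by auto
  qed
qed

end
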